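(* The upper bound $\mathcal{S}(T,d)\in O(\sigma n)$ (valid for every string $T$ of length $n>d$ over an alphabet of size $\sigma$) is tight when $\sigma\le d$ and $n-d\in\Omega(n)$: for every constant $\gamma\in(0,1)$ there is a constant $c>0$ such that for all integers $\sigma\ge 2$, $d$, $n$ with $\sigma\le d<n$ and $n-d\ge\gamma n$, there exists a string $T'$ of length $n$ over an alphabet of size $\sigma$ with $\mathcal{S}(T',d)\ge c\,\sigma n$.
   Context: For a string $S$ over alphabet $\Sigma$, a string $w\in\Sigma^*$ is a minimal absent word (MAW) of $S$ if $w$ does not occur in $S$ but every proper substring of $w$ (including the empty string) occurs in $S$; $\mathsf{MAW}(S)$ is the set of all MAWs of $S$. $T[a..b]$ denotes the substring of $T$ from position $a$ to $b$. For a string $T$ of length $n>d$, $\mathcal{S}(T,d)=\sum_{i=1}^{n-d}|\mathsf{MAW}(T[i..i+d-1])\bigtriangleup\mathsf{MAW}(T[i+1..i+d])|$, where $\bigtriangleup$ is symmetric difference. *)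

theory Defs
  imports Complex_Main "HOL-Library.Sublist"
begin

text \<open>Strings are lists; the alphabet is an explicit set Al. Occurrence of a
substring is the contiguous-sublist relation \<open>sublist\<close> from HOL-Library.Sublist.\<close>

definition MAW :: "'a set \<Rightarrow> 'a list \<Rightarrow> 'a list set" where
  "MAW Al S = {w. set w \<subseteq> Al \<and> \<not> sublist w S \<and>
                     (\<forall>u. sublist u w \<and> u \<noteq> w \<longrightarrow> sublist u S)}"

definition symdiff :: "'b set \<Rightarrow> 'b set \<Rightarrow> 'b set" where
  "symdiff A B = (A - B) \<union> (B - A)"

text \<open>Window T[i..i+d-1] (1-indexed) is \<open>take d (drop (i-1) T)\<close>; we index from 0.\<close>
definition window :: "'a list \<Rightarrow> nat \<Rightarrow> nat \<Rightarrow> 'a list" where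
  "window T i d = take d (drop i T)"

definition slideS :: "'a set \<Rightarrow> 'a list \<Rightarrow> nat \<Rightarrow> nat" where
  "slideS Al T d = (\<Sum>i<length T - d.
      card (symdiff (MAW Al (window T i d)) (MAW Al (window T (Suc i) d))))"

end

theory Submission
  imports Defs
begin


lemma sublist_map_upt:
  assumes ab: "a \<le> b" shows
  "sublist v (map f [a..<b]) \<longleftrightarrow> (\<exists>p\<ge>a. p + length v \<le> b \<and> v = map f [p..<p + length v])"
proof
  assume "sublist v (map f [a..<b])"
  then obtain ps ss where e: "map f [a..<b] = ps @ v @ ss" unfolding sublist_def by blast
  have len: "b - a = length ps + length v + length ss" using arg_cong[OF e, of length] by simp
  have "v = take (length v) (drop (length ps) (map f [a..<b]))" unfolding e by simp
  also have "\<dots> = map f [a + length ps..<a + length ps + length v]"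
  proof (cases "length v = 0")
    case False
    then have "a + length ps + length v \<le> b" using len by linarith
    then show ?thesis by (simp add: take_map drop_map)
  qed simp
  finally have vv: "v = map f [a + length ps..<a + length ps + length v]" .
  show "\<exists>p\<ge>a. p + length v \<le> b \<and> v = map f [p..<p + length v]"
  proof (cases "v = []")
    case True then show ?thesis using ab by (intro exI[of _ a]) auto
  next
    case False
    then have "a + length ps + length v \<le> b" using len by (cases v) auto
    moreover have "a \<le> a + length ps" by simp
    ultimately show ?thesis using vv by blast
  qed
next
  assume "\<exists>p\<ge>a. p + length v \<le> b \<and> v = map f [p..<p + length v]"
  then obtain p where p: "a \<le> p" "p + length v \<le> b" "v = map f [p..<p + length v]" by blast
  have "[a..<b] = [a..<p] @ [p..<p + length v] @ [p + length v..<b]"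
  proof -
    have 1: "[a..<b] = [a..<p] @ [p..<b]" using upt_add_eq_append[of a p "b-p"] p by simp
    have 2: "[p..<b] = [p..<p + length v] @ [p + length v..<b]"
      using upt_add_eq_append[of p "p + length v" "b-(p + length v)"] p by simp
    show ?thesis using 1 2 by simp
  qed
  then have "map f [a..<b] = map f [a..<p] @ map f [p..<p + length v] @ map f [p + length v..<b]" by simp
  then have "sublist (map f [p..<p + length v]) (map f [a..<b])" unfolding sublist_def by blast
  then show "sublist v (map f [a..<b])" by (metis p(3))
qed

lemma proper_sublist_Cons:
  assumes "u \<noteq> []" "sublist v (x # u)" "v \<noteq> x # u"
  shows "sublist v u \<or> sublist v (x # butlast u)"
proof -
  from assms(2) have "prefix v (x # u) \<or> sublist v u" by (simp add: sublist_Cons_right)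
  moreover have "x # u = (x # butlast u) @ [last u]" using assms(1) by simp
  ultimately show ?thesis using assms(3) by (metis prefix_snoc prefix_imp_sublist)
qed

lemma MAW_finite:
  assumes "finite Al" shows "finite (MAW Al S)"
proof -
  have "MAW Al S \<subseteq> {w. set w \<subseteq> Al \<and> length w \<le> Suc (length S)}"
  proof
    fix w assume w: "w \<in> MAW Al S"
    show "w \<in> {w. set w \<subseteq> Al \<and> length w \<le> Suc (length S)}"
    proof (cases w)
      case Nil then show ?thesis using w by (simp add: MAW_def)
    next
      case (Cons y ys)
      have "sublist ys w" using Cons by (simp add: sublist_Cons_right)
      moreover have "ys \<noteq> w" using Cons by simp
      ultimately have "sublist ys S" using w by (simp add: MAW_def)
      then have "length ys \<le> length S" by (rule sublist_length_le)
      then show ?thesis using w Cons by (simp add: MAW_def)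
    qed
  qed
  moreover have "finite {w. set w \<subseteq> Al \<and> length w \<le> Suc (length S)}"
    using finite_lists_length_le[OF assms] by simp
  ultimately show ?thesis by (rule finite_subset)
qed



lemma maw_change:
  assumes fin: "finite Al" and un: "u \<noteq> []" and uW: "sublist u W" and uW': "\<not> sublist u W'"
    and X: "\<And>x. x \<in> X \<Longrightarrow> sublist (x # butlast u) W \<and> \<not> sublist (x # u) W"
    and XA: "X \<subseteq> Al" and uA: "set u \<subseteq> Al"
  shows "card X \<le> card (symdiff (MAW Al W) (MAW Al W'))"
proof -
  have sub: "(\<lambda>x. x # u) ` X \<subseteq> symdiff (MAW Al W) (MAW Al W')"
  proof
    fix w assume "w \<in> (\<lambda>x. x # u) ` X"
    then obtain x where x: "x \<in> X" "w = x # u" by blast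
    have "w \<in> MAW Al W"
      unfolding MAW_def
    proof (intro CollectI conjI allI impI)
      show "set w \<subseteq> Al" using x XA uA by auto
      show "\<not> sublist w W" using X[OF x(1)] x(2) by simp
      fix v assume "sublist v w \<and> v \<noteq> w"
      then have "sublist v u \<or> sublist v (x # butlast u)" using proper_sublist_Cons[OF un] x(2) by blast
      then show "sublist v W" using X[OF x(1)] uW sublist_order.order_trans by blast
    qed
    moreover have "w \<notin> MAW Al W'"
    proof
      assume "w \<in> MAW Al W'"
      moreover have "sublist u w" using x(2) by (simp add: sublist_Cons_right)
      moreover have "u \<noteq> w" using x(2) by simp
      ultimately show False using uW' unfolding MAW_def by blast
    qed
    ultimately show "w \<in> symdiff (MAW Al W) (MAW Al W')" unfolding symdiff_def by blast
  qed
  have "finite (symdiff (MAW Al W) (MAW Al W'))"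
    unfolding symdiff_def using MAW_finite[OF fin] by blast
  then have "card ((\<lambda>x. x # u) ` X) \<le> card (symdiff (MAW Al W) (MAW Al W'))"
    using sub card_mono by blast
  moreover have "card ((\<lambda>x. x # u) ` X) = card X"
    by (rule card_image) (auto simp: inj_on_def)
  ultimately show ?thesis by simp
qed



definition gg :: "nat \<Rightarrow> nat \<Rightarrow> nat \<Rightarrow> nat" where
  "gg q L e = (if e mod L = L - 1 then Suc ((e div L) mod q) else 0)"

lemma gg_le: "1 \<le> q \<Longrightarrow> gg q L e < Suc q"
  unfolding gg_def by auto

lemma divmod_lin:
  fixes a b L :: nat
  assumes "b < L" shows "(a*L + b) mod L = b" "(a*L + b) div L = a"
  using assms by simp_all

lemma mod_eq_ge:
  fixes j j' q :: nat
  assumes "j' mod q = j mod q" "j < j'" "1 \<le> q"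
  shows "j + q \<le> j'"
proof -
  have "q dvd j' - j" using assms mod_eq_dvd_iff_nat[of j j' q] by simp
  moreover have "0 < j' - j" using assms by simp
  ultimately have "q \<le> j' - j" by (rule dvd_imp_le)
  then show ?thesis using assms(2) by linarith
qed

lemma shift_bound:
  fixes q L d E cnt :: nat
  assumes q1: "1 \<le> q" and L2: "2 \<le> L" and qL: "d < q*L" and cq: "cnt \<le> q"
    and cL: "cnt*L \<le> d+1" and good: "L \<le> 2*(E mod L)"
  shows "cnt \<le> card (symdiff (MAW {0..<Suc q} (map (gg q L) [E..<E+d]))
                               (MAW {0..<Suc q} (map (gg q L) [Suc E..<Suc E+d])))"
proof (cases "cnt = 0")
  case True then show ?thesis by simp
next
  case False
  define G where "G = gg q L"
  define j where "j = E div L"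
  define r where "r = E mod L"
  have E: "E = j*L + r" unfolding j_def r_def by simp
  have rL: "r < L" unfolding r_def using L2 by simp
  have r2: "L \<le> 2*r" using good r_def by simp
  define s where "s = L - 1 - r"
  have Ld: "L \<le> d + 1" 
  proof -
    have "L \<le> cnt*L" using False by simp
    then show ?thesis using cL by linarith
  qed
  have sd: "s + 1 \<le> d" unfolding s_def using Ld r2 rL by linarith
  have Es: "E + s = j*L + (L-1)" unfolding s_def E using rL by simp
  have Esm: "(E+s) mod L = L - 1" "(E+s) div L = j"
    unfolding Es using divmod_lin[of "L-1" L j] L2 by simp_all
  have Gy: "G (E+s) = Suc (j mod q)" unfolding G_def gg_def using Esm by simp
  have F3: "G e \<noteq> G (E+s)" if e1: "E+s < e" and e2: "e \<le> E+d" for e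
  proof
    assume eq: "G e = G (E+s)"
    then have em: "e mod L = L - 1" and ed: "(e div L) mod q = j mod q"
      using Gy unfolding G_def gg_def by (auto split: if_splits)
    have "e = (e div L)*L + (L-1)" using em by (metis div_mult_mod_eq)
    then have "j < e div L" using e1 Es
      by (metis add_less_cancel_right mult_less_cancel2 not_less_iff_gr_or_eq)
    then have "j + q \<le> e div L" using mod_eq_ge ed q1 by blast
    then have "(j+q)*L \<le> (e div L)*L" by simp
    then have "(j+q)*L + (L-1) \<le> e" using \<open>e = (e div L)*L + (L-1)\<close> by linarith
    then have "E + s + q*L \<le> e" using Es by (simp add: algebra_simps)
    then show False using qL e2 by linarith
  qed
  have zeroE: "G (E+t) = 0" if "t < s" for t
  proof -
    have "E + t = j*L + (r+t)" using E by simp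
    moreover have "r + t < L - 1" using that s_def by linarith
    moreover have "(j*L + (r+t)) mod L = r + t" by (rule divmod_lin) (use \<open>r + t < L - 1\<close> in linarith)
    ultimately have "(E+t) mod L = r + t" by metis
    then show ?thesis unfolding G_def gg_def using \<open>r + t < L - 1\<close> by simp
  qed
  define u where "u = map G [E..<E+(s+1)]"
  have lu: "length u = s + 1" unfolding u_def by simp
  have us: "u ! s = G (E+s)" unfolding u_def by (simp add: nth_append)
  have bu: "butlast u = map G [E..<E+s]" unfolding u_def by simp
  define W where "W = map G [E..<E+d]"
  define W' where "W' = map G [Suc E..<Suc E+d]"
  have uW: "sublist u W" unfolding W_def
    using sd by (subst sublist_map_upt) (auto simp: u_def intro!: exI[of _ E])
  have uW': "\<not> sublist u W'"
  proof
    assume "sublist u W'"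
    then obtain p where p: "Suc E \<le> p" "p + (s+1) \<le> Suc E + d" "u = map G [p..<p+(s+1)]"
      unfolding W'_def using lu by (subst (asm) sublist_map_upt) auto
    then have "u ! s = G (p + s)" by (simp add: nth_append)
    then show False using F3[of "p+s"] p us by simp
  qed
  define X where "X = (\<lambda>k. Suc ((j+k) mod q)) ` {..<cnt}"
  have cardX: "card X = cnt"
    unfolding X_def
  proof (rule card_image[THEN trans])
    show "inj_on (\<lambda>k. Suc ((j+k) mod q)) {..<cnt}"
    proof (rule inj_onI)
      fix k k' assume k: "k \<in> {..<cnt}" "k' \<in> {..<cnt}" "Suc ((j+k) mod q) = Suc ((j+k') mod q)"
      show "k = k'"
      proof (rule ccontr)
        assume "k \<noteq> k'"
        then consider "k < k'" | "k' < k" by linarith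
        then show False
        proof cases
          case 1 then have "j + k + q \<le> j + k'" using mod_eq_ge[of "j+k'" q "j+k"] k q1 by simp
          then show False using k cq by simp
        next
          case 2 then have "j + k' + q \<le> j + k" using mod_eq_ge[of "j+k" q "j+k'"] k q1 by simp
          then show False using k cq by simp
        qed
      qed
    qed
  qed simp
  have keyX: "sublist (x # butlast u) W \<and> \<not> sublist (x # u) W" if xX: "x \<in> X" for x
  proof
    obtain k where k: "k < cnt" "x = Suc ((j+k) mod q)" using xX X_def by blast
    define P where "P = (j+k)*L + (L-1)"
    have Pm: "P mod L = L - 1" "P div L = j + k"
      unfolding P_def using divmod_lin[of "L-1" L "j+k"] L2 by simp_all
    have GP: "G P = x" unfolding G_def gg_def k using Pm by simp
    have PE: "E \<le> P" unfolding P_def E using rL by (simp add: add_mult_distrib)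
    have "(k+1)*L \<le> cnt*L" using k(1) by (intro mult_le_mono1) simp
    then have "(k+1)*L \<le> d + 1" using cL by linarith
    then have "k*L + L \<le> d+1" by simp
    then have Pd: "P + (s+1) \<le> E + d" unfolding P_def E s_def using rL r2 L2
      by (simp add: add_mult_distrib)
    have zP: "G (Suc P + t) = 0" if "t < s" for t
    proof -
      have "Suc P + t = (j+k+1)*L + t" unfolding P_def using L2 by simp
      moreover have "t < L - 1" using that s_def by linarith
      moreover have "((j+k+1)*L + t) mod L = t" by (rule divmod_lin) (use \<open>t < L - 1\<close> in linarith)
    ultimately have "(Suc P + t) mod L = t" by metis
      then show ?thesis unfolding G_def gg_def using \<open>t < L - 1\<close> by simp
    qed
    have "map G [Suc P..<Suc P + s] = map G [E..<E+s]"
      by (rule nth_equalityI) (auto simp: zP[simplified] zeroE simp del: upt_Suc)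
    then have "x # butlast u = map G [P..<P+(s+1)]"
      using GP bu by (simp add: upt_rec del: upt_Suc)
    then show "sublist (x # butlast u) W" unfolding W_def
      using PE Pd by (subst sublist_map_upt) (auto intro!: exI[of _ P])
    show "\<not> sublist (x # u) W"
    proof
      assume "sublist (x # u) W"
      then obtain p where p: "E \<le> p" "p + (s+2) \<le> E + d" "x # u = map G [p..<p+(s+2)]"
        unfolding W_def using lu by (subst (asm) sublist_map_upt) auto
      then have "(x # u) ! (Suc s) = G (p + Suc s)" by (simp del: upt_Suc)
      then have "u ! s = G (p + Suc s)" by simp
      then show False using F3[of "p + Suc s"] p us by simp
    qed
  qed
  have "card X \<le> card (symdiff (MAW {0..<Suc q} W) (MAW {0..<Suc q} W'))"
  proof (rule maw_change)
    show "u \<noteq> []" using lu by auto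
    show "X \<subseteq> {0..<Suc q}" unfolding X_def using q1 by auto
    show "set u \<subseteq> {0..<Suc q}" unfolding u_def G_def using gg_le[OF q1] by auto
  qed (use uW uW' keyX in auto)
  then show ?thesis using cardX unfolding W_def W'_def G_def by simp
qed



lemma count_good:
  fixes L g :: nat assumes L0: "0 < L" and gL: "g \<le> L"
  shows "(\<Sum>i<N. if i mod L < g then 1 else 0::nat) = g*(N div L) + min g (N mod L)"
proof (induction N)
  case 0 then show ?case by simp
next
  case (Suc N)
  have mL: "N mod L < L" using L0 by simp
  show ?case
  proof (cases "Suc (N mod L) = L")
    case True
    then have "Suc N mod L = 0" "Suc N div L = Suc (N div L)"
      using mod_Suc[of N L] div_Suc[of N L] by auto
    then show ?thesis using Suc True gL by (auto simp: min_def)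
  next
    case False
    then have "Suc N mod L = Suc (N mod L)" "Suc N div L = N div L"
      using mod_Suc[of N L] div_Suc[of N L] by auto
    then show ?thesis using Suc False gL mL by (auto simp: min_def)
  qed
qed

lemma count_good_bound:
  fixes L g :: nat assumes L0: "0 < L" and gL: "g \<le> L"
  shows "g * N \<le> L * (\<Sum>i<N. if i mod L < g then 1 else 0::nat)"
proof -
  have N: "N = L*(N div L) + N mod L" by simp
  have m: "g * (N mod L) \<le> L * min g (N mod L)"
  proof (cases "g \<le> N mod L")
    case True
    have "g * (N mod L) \<le> g * L" using L0 by simp
    then show ?thesis using True by (simp add: min_def mult.commute)
  next
    case False
    then show ?thesis using gL by (simp add: min_def)
  qed
  have "g * N = g*(L*(N div L) + N mod L)" by (simp only: mult_div_mod_eq)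
  also have "\<dots> = g*L*(N div L) + g * (N mod L)" by (metis distrib_left mult.assoc)
  also have "\<dots> \<le> L*(g*(N div L)) + L * min g (N mod L)" using m by (simp add: algebra_simps)
  also have "\<dots> = L * (g*(N div L) + min g (N mod L))" by (simp add: algebra_simps)
  finally show ?thesis using count_good[OF L0 gL, of N] by simp
qed

lemma cnt_bound:
  fixes q d :: nat
  assumes q1: "1 \<le> q" and dq: "q < d"
  defines "L \<equiv> d div q + 1"
  shows "Suc q \<le> 4 * min q ((d+1) div L)"
proof -
  define m where "m = (d+1) div L"
  have "0 < d div q" using dq q1 by (simp add: div_greater_zero_iff)
  then have L2: "2 \<le> L" unfolding L_def by simp
  have Ld: "L \<le> d + 1" unfolding L_def using div_le_dividend[of d q] by simp
  have "0 < m" unfolding m_def using Ld L2 by (simp add: div_greater_zero_iff)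
  then have m1: "1 \<le> m" by simp
  have qL: "q * L \<le> d + q" unfolding L_def using div_mult_mod_eq[of d q] by (simp add: algebra_simps)
  have e1: "L * m + (d+1) mod L = d+1" unfolding m_def by (rule mult_div_mod_eq)
  have e2: "(d+1) mod L < L" using L2 by simp
  have e3: "(m+1)*L = L*m + L" by (simp add: algebra_simps)
  have dm: "d + 1 < (m+1) * L" using e1 e2 e3 by linarith
  have "q \<le> 2*m + 1"
  proof (rule ccontr)
    assume "\<not> q \<le> 2*m+1"
    define t where "t = q - (m + 1)"
    have t: "q = m + 1 + t" "m + 1 \<le> t" using \<open>\<not> q \<le> 2*m+1\<close> unfolding t_def by linarith+
    have "q * L = (m+1)*L + t*L" using t by (simp add: algebra_simps)
    moreover have "2*t \<le> t*L" using L2 by simp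
    ultimately show False using qL dm t by linarith
  qed
  then show ?thesis unfolding m_def[symmetric] using m1 q1 by (simp add: min_def)
qed



lemma window_map:
  assumes "i + d \<le> n"
  shows "window (map G [a..<a+n]) i d = map G [a+i..<a+i+d]"
  using assms unfolding window_def by (simp add: take_map drop_map)

theorem lemma15:
  fixes \<gamma> :: real
  assumes "0 < \<gamma>" and "\<gamma> < 1"
  shows "\<exists>c::real. c > 0 \<and>
    (\<forall>\<sigma> d n :: nat. 2 \<le> \<sigma> \<and> \<sigma> \<le> d \<and> d < n \<and> real (n - d) \<ge> \<gamma> * real n \<longrightarrow>
       (\<exists>T :: nat list. length T = n \<and> set T \<subseteq> {0..<\<sigma>} \<and>
          real (slideS {0..<\<sigma>} T d) \<ge> c * real \<sigma> * real n))"
proof (intro exI[of _ "\<gamma> / 12"] conjI allI impI)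
  show "0 < \<gamma> / 12" using assms by simp
  fix \<sigma> d n :: nat
  assume H: "2 \<le> \<sigma> \<and> \<sigma> \<le> d \<and> d < n \<and> real (n - d) \<ge> \<gamma> * real n"
  define q where "q = \<sigma> - 1"
  have sq: "\<sigma> = Suc q" and q1: "1 \<le> q" and qd: "q < d" using H unfolding q_def by auto
  define L where "L = d div q + 1"
  define cnt where "cnt = min q ((d+1) div L)"
  define g where "g = L div 2"
  define a where "a = L - g"
  define G where "G = gg q L"
  define T where "T = map G [a..<a+n]"
  define N where "N = n - d"
  have "0 < d div q" using qd q1 by (simp add: div_greater_zero_iff)
  then have L2: "2 \<le> L" unfolding L_def by simp
  have qL: "d < q * L"
  proof -
    have "q * (d div q) + d mod q = d" by (rule mult_div_mod_eq)
    moreover have "d mod q < q" using q1 by simp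
    moreover have "q * L = q * (d div q) + q" unfolding L_def by (simp add: algebra_simps)
    ultimately show ?thesis by linarith
  qed
  have cq: "cnt \<le> q" unfolding cnt_def by simp
  have cL: "cnt * L \<le> d + 1"
  proof -
    have "cnt * L \<le> ((d+1) div L) * L" unfolding cnt_def by (intro mult_le_mono1) simp
    also have "\<dots> \<le> d + 1" by (rule div_times_less_eq_dividend)
    finally show ?thesis .
  qed
  have c4: "\<sigma> \<le> 4 * cnt" unfolding sq cnt_def L_def using cnt_bound[OF q1 qd] by simp
  have gL: "g \<le> L" unfolding g_def by simp
  have g3: "L \<le> 3 * g" unfolding g_def using L2 by linarith
  have lenT: "length T = n" unfolding T_def by simp
  have setT: "set T \<subseteq> {0..<\<sigma>}" unfolding T_def G_def sq using gg_le[OF q1] by auto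
  have per: "(if i mod L < g then cnt else 0)
      \<le> card (symdiff (MAW {0..<\<sigma>} (window T i d)) (MAW {0..<\<sigma>} (window T (Suc i) d)))"
    if iN: "i < n - d" for i
  proof (cases "i mod L < g")
    case True
    have w1: "window T i d = map G [a+i..<a+i+d]" unfolding T_def using iN by (intro window_map) linarith
    have "window T (Suc i) d = map G [a + Suc i..<a + Suc i+d]" unfolding T_def using iN
      by (intro window_map) linarith
    then have w2: "window T (Suc i) d = map G [Suc (a+i)..<Suc (a+i)+d]" by simp
    have "(a + i) mod L = (a + i mod L) mod L" by (simp add: mod_add_right_eq)
    also have "\<dots> = a + i mod L" using True gL unfolding a_def by simp
    finally have "L \<le> 2 * ((a+i) mod L)" unfolding a_def g_def by linarith
    then have "cnt \<le> card (symdiff (MAW {0..<Suc q} (map (gg q L) [a+i..<a+i+d]))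
                               (MAW {0..<Suc q} (map (gg q L) [Suc (a+i)..<Suc (a+i)+d])))"
      by (intro shift_bound q1 L2 qL cq cL)
    then show ?thesis using True w1 w2 unfolding G_def sq by simp
  qed simp
  have "(\<Sum>i<N. if i mod L < g then cnt else 0) \<le> slideS {0..<\<sigma>} T d"
    unfolding slideS_def lenT N_def by (rule sum_mono) (use per in simp)
  moreover have "(\<Sum>i<N. if i mod L < g then cnt else 0) = cnt * (\<Sum>i<N. if i mod L < g then 1 else 0::nat)"
    unfolding sum_distrib_left by (rule sum.cong) auto
  ultimately have S1: "cnt * (\<Sum>i<N. if i mod L < g then 1 else 0::nat) \<le> slideS {0..<\<sigma>} T d" by simp
  define F where "F = (\<Sum>i<N. if i mod L < g then 1 else 0::nat)"
  have "g * N \<le> L * F" unfolding F_def using count_good_bound[OF _ gL, of N] L2 by simp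
  moreover have "L * F \<le> (3 * g) * F" using g3 by (rule mult_le_mono1)
  moreover have "(3 * g) * F = g * (3 * F)" by simp
  ultimately have "g * N \<le> g * (3 * F)" by linarith
  moreover have "0 < g" unfolding g_def using L2 by simp
  ultimately have N3: "N \<le> 3 * F" by simp
  have "\<sigma> * N \<le> (4 * cnt) * (3 * F)" using c4 N3 by (rule mult_le_mono)
  also have "\<dots> = 12 * (cnt * F)" by simp
  also have "\<dots> \<le> 12 * slideS {0..<\<sigma>} T d" using S1 unfolding F_def by simp
  finally have "real (\<sigma> * N) \<le> real (12 * slideS {0..<\<sigma>} T d)" by (rule of_nat_mono)
  then have "real \<sigma> * real N \<le> 12 * real (slideS {0..<\<sigma>} T d)" by simp
  moreover have "\<gamma> * real n \<le> real N" using H unfolding N_def by (simp del: of_nat_diff)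
  ultimately have "real \<sigma> * (\<gamma> * real n) \<le> 12 * real (slideS {0..<\<sigma>} T d)"
    using mult_left_mono[of "\<gamma> * real n" "real N" "real \<sigma>"] by simp
  then have "\<gamma> / 12 * real \<sigma> * real n \<le> real (slideS {0..<\<sigma>} T d)" by (simp add: field_simps)
  then show "\<exists>T :: nat list. length T = n \<and> set T \<subseteq> {0..<\<sigma>} \<and>
          real (slideS {0..<\<sigma>} T d) \<ge> \<gamma> / 12 * real \<sigma> * real n"
    using lenT setT by blast
qed


end
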